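(* Let $(X,\sigma)$ be an $F$-distance space and let $T:X\to X$ be a map such that $\sigma(Tx,Ty)\le\lambda\sigma(x,y)$ for some $\lambda\in[0,1)$ and all $x,y\in X$. Then: (1) for every $x_1\in X$, the sequence $\{x_n\}$ defined by $x_{n+1}=Tx_n$ ($n\in\mathbb N$) is Cauchy in $(X,\sigma)$; (2) if $(X,\sigma)$ is complete, then $T$ has a unique fixed point.
   Context: An $F$-distance on a nonempty set $X$ is a function $\sigma:X\times X\to[0,\infty)$ (not assumed symmetric) such that: $\sigma(x,y)=0$ iff $x=y$; and for every $\varepsilon>0$ there exists $\phi(\varepsilon)>0$ such that for all $x,y,z\in X$, if $\sigma(x,y)\le\phi(\varepsilon)$ and $\sigma(y,z)\le\phi(\varepsilon)$ then $\sigma(x,z)\le\varepsilon$ and $\sigma(z,x)\le\varepsilon$. The pair $(X,\sigma)$ is an $F$-distance space. A sequence $\{x_n\}$ converges to $x$ in $(X,\sigma)$ if $\lim_n\sigma(x_n,x)=0=\lim_n\sigma(x,x_n)$; it is Cauchy if $\lim_{n,m\to\infty}\sigma(x_n,x_m)=0$; $(X,\sigma)$ is complete if every Cauchy sequence converges. *)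

theory Defs
  imports "HOL-Analysis.Analysis"
begin

definition F_distance :: "('a \<Rightarrow> 'a \<Rightarrow> real) \<Rightarrow> bool" where
  "F_distance \<sigma> \<longleftrightarrow>
     (\<forall>x y. \<sigma> x y \<ge> 0) \<and>
     (\<forall>x y. \<sigma> x y = 0 \<longleftrightarrow> x = y) \<and>
     (\<forall>\<epsilon>>0. \<exists>\<delta>>0. \<forall>x y z. \<sigma> x y \<le> \<delta> \<and> \<sigma> y z \<le> \<delta> \<longrightarrow>
                          \<sigma> x z \<le> \<epsilon> \<and> \<sigma> z x \<le> \<epsilon>)"

definition F_converges :: "('a \<Rightarrow> 'a \<Rightarrow> real) \<Rightarrow> (nat \<Rightarrow> 'a) \<Rightarrow> 'a \<Rightarrow> bool" where
  "F_converges \<sigma> s x \<longleftrightarrow>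
     ((\<lambda>n. \<sigma> (s n) x) \<longlonglongrightarrow> 0) \<and> ((\<lambda>n. \<sigma> x (s n)) \<longlonglongrightarrow> 0)"

definition F_Cauchy :: "('a \<Rightarrow> 'a \<Rightarrow> real) \<Rightarrow> (nat \<Rightarrow> 'a) \<Rightarrow> bool" where
  "F_Cauchy \<sigma> s \<longleftrightarrow> (\<forall>\<epsilon>>0. \<exists>N. \<forall>n\<ge>N. \<forall>m\<ge>N. \<sigma> (s n) (s m) < \<epsilon>)"

definition F_complete :: "('a \<Rightarrow> 'a \<Rightarrow> real) \<Rightarrow> bool" where
  "F_complete \<sigma> \<longleftrightarrow> (\<forall>s. F_Cauchy \<sigma> s \<longrightarrow> (\<exists>x. F_converges \<sigma> s x))"

end

theory Submission
  imports Defs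
begin

lemma contr_pow:
  fixes \<sigma> :: "'a \<Rightarrow> 'a \<Rightarrow> real" and k :: real
  assumes "0 \<le> k" "\<forall>x y. \<sigma> (T x) (T y) \<le> k * \<sigma> x y"
  shows "\<sigma> ((T^^a) x) ((T^^a) y) \<le> k^a * \<sigma> x y"
proof (induction a)
  case 0 then show ?case by simp
next
  case (Suc a)
  have "\<sigma> ((T^^Suc a) x) ((T^^Suc a) y) \<le> k * \<sigma> ((T^^a) x) ((T^^a) y)"
    using assms(2) by simp
  also have "\<dots> \<le> k * (k^a * \<sigma> x y)" using Suc assms(1) by (simp add: mult_left_mono)
  finally show ?case by simp
qed

lemma Fd_delta:
  assumes "F_distance \<sigma>" "e > 0"
  obtains d where "d > 0" "\<forall>x y z. \<sigma> x y \<le> d \<and> \<sigma> y z \<le> d \<longrightarrow> \<sigma> x z \<le> e \<and> \<sigma> z x \<le> e"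
  using assms unfolding F_distance_def by blast

lemma cauchy_part:
  fixes \<sigma> :: "'a \<Rightarrow> 'a \<Rightarrow> real" and T :: "'a \<Rightarrow> 'a" and k :: real
  assumes Fd: "F_distance \<sigma>"
    and k0: "0 \<le> k" and k1: "k < 1"
    and c: "\<forall>x y. \<sigma> (T x) (T y) \<le> k * \<sigma> x y"
  shows "F_Cauchy \<sigma> (\<lambda>n. (T ^^ n) x1)"
  unfolding F_Cauchy_def
proof (intro allI impI)
  fix \<epsilon> :: real assume ep: "\<epsilon> > 0"
  define s where "s = (\<lambda>n. (T ^^ n) x1)"
  have nn: "\<And>x y. \<sigma> x y \<ge> 0" using Fd unfolding F_distance_def by blast
  define e where "e = \<epsilon>/2"
  have e0: "e > 0" using ep e_def by simp
  obtain d0 where d0: "d0 > 0" "\<forall>x y z. \<sigma> x y \<le> d0 \<and> \<sigma> y z \<le> d0 \<longrightarrow> \<sigma> x z \<le> e \<and> \<sigma> z x \<le> e"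
    using Fd_delta[OF Fd e0] by blast
  define d where "d = min d0 e"
  have d: "d > 0" "d \<le> e" "\<forall>x y z. \<sigma> x y \<le> d \<and> \<sigma> y z \<le> d \<longrightarrow> \<sigma> x z \<le> e \<and> \<sigma> z x \<le> e"
    using d0 e0 unfolding d_def by auto
  have "(\<lambda>n. k^n) \<longlonglongrightarrow> 0" using k0 k1 by (intro LIMSEQ_realpow_zero) auto
  then have "\<forall>\<^sub>F n in sequentially. k^n < d/e" using d e0
    by (intro order_tendstoD) auto
  then obtain p0 where p0: "k^p0 < d/e" by (meson eventually_sequentially order_refl)
  define p where "p = Suc p0"
  have "k^p \<le> k^p0" unfolding p_def using k0 k1 by (simp add: mult_left_le_one_le)
  with p0 have kp: "k^p * e \<le> d" using e0
    by (smt (verit, best) mult_right_mono pos_less_divide_eq)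
  have p1: "p \<ge> 1" unfolding p_def by simp
  have shift: "\<And>n i. s (n+i) = (T^^n) (s i)" unfolding s_def by (simp add: funpow_add)
  have lim: "\<And>i. (\<lambda>n. \<sigma> (s n) (s (n+i))) \<longlonglongrightarrow> 0"
  proof -
    fix i
    have "(\<lambda>n. k^n * \<sigma> (s 0) (s i)) \<longlonglongrightarrow> 0 * \<sigma> (s 0) (s i)"
      using k0 k1 by (intro tendsto_mult LIMSEQ_realpow_zero) auto
    moreover have "\<And>n. \<sigma> (s n) (s (n+i)) \<le> k^n * \<sigma> (s 0) (s i)"
    proof -
      fix n
      have "s n = (T^^n) (s 0)" using shift[of n 0] by simp
      then show "\<sigma> (s n) (s (n+i)) \<le> k^n * \<sigma> (s 0) (s i)"
        using contr_pow[OF k0 c, of n "s 0" "s i"] shift[of n i] by simp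
    qed
    ultimately have L: "(\<lambda>n. k^n * \<sigma> (s 0) (s i)) \<longlonglongrightarrow> 0"
      and U: "\<And>n. \<sigma> (s n) (s (n+i)) \<le> k^n * \<sigma> (s 0) (s i)" by simp_all
    show "(\<lambda>n. \<sigma> (s n) (s (n+i))) \<longlonglongrightarrow> 0"
      apply (rule tendsto_sandwich[OF _ _ tendsto_const L])
      using nn U by (simp_all add: always_eventually)
  qed
  have "\<forall>\<^sub>F n in sequentially. \<forall>i\<in>{..p}. \<sigma> (s n) (s (n+i)) < d"
    using d(1) by (intro eventually_ball_finite ballI order_tendstoD(2)[OF lim]) auto
  then obtain N where N: "\<And>n i. n \<ge> N \<Longrightarrow> i \<le> p \<Longrightarrow> \<sigma> (s n) (s (n+i)) < d"
    unfolding eventually_sequentially by auto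
  have main: "\<And>n. n \<ge> N \<Longrightarrow> \<sigma> (s n) (s (n+j)) \<le> e \<and> \<sigma> (s (n+j)) (s n) \<le> e" for j
  proof (induction j rule: less_induct)
    case (less j)
    show ?case
    proof (cases "j \<le> p")
      case True
      have z: "\<sigma> (s n) (s n) = 0" using Fd unfolding F_distance_def by blast
      have "\<sigma> (s n) (s (n+j)) \<le> d" using N[OF less.prems True] by simp
      moreover have "\<sigma> (s n) (s n) \<le> d" using z d(1) by simp
      ultimately show ?thesis using d(3)[rule_format, of "s n" "s n" "s (n+j)"] by simp
    next
      case False
      define j' where "j' = j - p"
      have jj: "j = p + j'" "j' < j" using False p1 unfolding j'_def by auto
      have a: "\<sigma> (s n) (s (n+p)) \<le> d" using N[OF less.prems, of p] by simp
      have "\<sigma> (s (n+p)) (s (n+j)) = \<sigma> ((T^^p) (s n)) ((T^^p) (s (n+j')))"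
        using shift[of p n] shift[of p "n+j'"] jj by (simp add: add.commute add.left_commute)
      also have "\<dots> \<le> k^p * \<sigma> (s n) (s (n+j'))" by (rule contr_pow[OF k0 c])
      also have "\<dots> \<le> k^p * e" using less.IH[OF jj(2) less.prems] k0
        by (intro mult_left_mono) auto
      also have "\<dots> \<le> d" by (rule kp)
      finally show ?thesis using d(3)[rule_format, of "s n" "s (n+p)" "s (n+j)"] a by simp
    qed
  qed
  show "\<exists>N. \<forall>n\<ge>N. \<forall>m\<ge>N. \<sigma> ((T ^^ n) x1) ((T ^^ m) x1) < \<epsilon>"
  proof (intro exI allI impI)
    fix n m assume nm: "n \<ge> N" "m \<ge> N"
    show "\<sigma> ((T ^^ n) x1) ((T ^^ m) x1) < \<epsilon>"
    proof (cases "n \<le> m")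
      case True
      then have "\<sigma> (s n) (s (n + (m-n))) \<le> e" using main nm by blast
      then show ?thesis using True e_def ep unfolding s_def by simp
    next
      case False
      then have "\<sigma> (s (m + (n-m))) (s m) \<le> e" using main nm by blast
      then show ?thesis using False e_def ep unfolding s_def by simp
    qed
  qed
qed


theorem mainTheorem2:
  fixes \<sigma> :: "'a \<Rightarrow> 'a \<Rightarrow> real" and T :: "'a \<Rightarrow> 'a" and k :: real
  assumes "F_distance \<sigma>"
    and "0 \<le> k" and "k < 1"
    and "\<forall>x y. \<sigma> (T x) (T y) \<le> k * \<sigma> x y"
  shows "(\<forall>x1. F_Cauchy \<sigma> (\<lambda>n. (T ^^ n) x1))
       \<and> (F_complete \<sigma> \<longrightarrow> (\<exists>!x. T x = x))"
proof (intro conjI allI impI)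
  note Fd = assms(1) and k0 = assms(2) and k1 = assms(3) and c = assms(4)
  fix x1 show "F_Cauchy \<sigma> (\<lambda>n. (T ^^ n) x1)" by (rule cauchy_part[OF assms])
next
  note Fd = assms(1) and k0 = assms(2) and k1 = assms(3) and c = assms(4)
  have nn: "\<And>x y. \<sigma> x y \<ge> 0" and z: "\<And>x y. \<sigma> x y = 0 \<longleftrightarrow> x = y"
    using Fd unfolding F_distance_def by blast+
  assume "F_complete \<sigma>"
  then obtain x where cv: "F_converges \<sigma> (\<lambda>n. (T ^^ n) undefined) x"
    using cauchy_part[OF assms] unfolding F_complete_def by blast
  define s where "s = (\<lambda>n. (T ^^ n) (undefined::'a))"
  have l1: "(\<lambda>n. \<sigma> (s n) x) \<longlonglongrightarrow> 0" and l2: "(\<lambda>n. \<sigma> x (s n)) \<longlonglongrightarrow> 0"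
    using cv unfolding F_converges_def s_def by auto
  have l3: "(\<lambda>n. \<sigma> (s (Suc n)) (T x)) \<longlonglongrightarrow> 0"
  proof -
    have "(\<lambda>n. k * \<sigma> (s n) x) \<longlonglongrightarrow> k * 0" by (intro tendsto_mult tendsto_const l1)
    moreover have "\<And>n. \<sigma> (s (Suc n)) (T x) \<le> k * \<sigma> (s n) x"
      using c unfolding s_def by simp
    ultimately have L: "(\<lambda>n. k * \<sigma> (s n) x) \<longlonglongrightarrow> 0"
      and U: "\<And>n. \<sigma> (s (Suc n)) (T x) \<le> k * \<sigma> (s n) x" by simp_all
    show ?thesis
      apply (rule tendsto_sandwich[OF _ _ tendsto_const L])
      using nn U by (simp_all add: always_eventually)
  qed
  have l4: "(\<lambda>n. \<sigma> x (s (Suc n))) \<longlonglongrightarrow> 0" using l2 by (rule LIMSEQ_Suc)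
  have small: "\<sigma> x (T x) \<le> e" if e: "e > 0" for e
  proof -
    obtain d where d: "d > 0" "\<forall>x y z. \<sigma> x y \<le> d \<and> \<sigma> y z \<le> d \<longrightarrow> \<sigma> x z \<le> e \<and> \<sigma> z x \<le> e"
      using Fd_delta[OF Fd e] by blast
    have "\<forall>\<^sub>F n in sequentially. \<sigma> x (s (Suc n)) < d" using l4 d(1) by (rule order_tendstoD)
    moreover have "\<forall>\<^sub>F n in sequentially. \<sigma> (s (Suc n)) (T x) < d" using l3 d(1) by (rule order_tendstoD)
    ultimately have "\<forall>\<^sub>F n in sequentially. \<sigma> x (s (Suc n)) < d \<and> \<sigma> (s (Suc n)) (T x) < d"
      by (rule eventually_conj)
    then obtain N where "\<forall>n\<ge>N. \<sigma> x (s (Suc n)) < d \<and> \<sigma> (s (Suc n)) (T x) < d"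
      unfolding eventually_sequentially by blast
    then have "\<sigma> x (s (Suc N)) < d" "\<sigma> (s (Suc N)) (T x) < d" by auto
    then show ?thesis using d(2)[rule_format, of x "s (Suc N)" "T x"] by simp
  qed
  have "\<sigma> x (T x) \<le> 0"
  proof (rule ccontr)
    assume "\<not> \<sigma> x (T x) \<le> 0"
    then have "\<sigma> x (T x) > 0" by simp
    then have "\<sigma> x (T x) \<le> \<sigma> x (T x) / 2" using small[of "\<sigma> x (T x) / 2"] by simp
    then show False using \<open>\<sigma> x (T x) > 0\<close> by simp
  qed
  then have "T x = x" using nn[of x "T x"] z[of x "T x"] by simp
  moreover have "y = x" if "T y = y" for y
  proof -
    have "\<sigma> y x \<le> k * \<sigma> y x" using c[rule_format, of y x] \<open>T x = x\<close> that by simp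
    have "\<sigma> y x \<le> 0"
    proof (rule ccontr)
      assume "\<not> \<sigma> y x \<le> 0"
      then have "k * \<sigma> y x < 1 * \<sigma> y x" using k1 by (intro mult_strict_right_mono) auto
      then show False using \<open>\<sigma> y x \<le> k * \<sigma> y x\<close> by simp
    qed
    then show ?thesis using nn[of y x] z[of y x] by simp
  qed
  ultimately show "\<exists>!x. T x = x" by blast
qed

end
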